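(* Let $(\mathcal{A},\mathbf{m})$ be a multiarrangement in $\mathbb{Q}^l$ with $\mathcal{A}=\{H_1,\dots,H_n\}$, $H_i=\alpha_i^{-1}(0)$, where the $\alpha_i\in S_\mathbb{Z}=\mathbb{Z}[x_1,\dots,x_l]$ are linear forms such that no prime number divides any $\alpha_i$, and let $p$ be a good prime for $(\mathcal{A},\mathbf{m})$. If $p$ is not a zero divisor of $\operatorname{coker}(\varphi_\mathbb{Z})$, then the map $\pi_p^l\colon\operatorname{Ker}(\varphi_\mathbb{Z})\to D(\mathcal{A}_p,\mathbf{m})$ is surjective.
   Context: For a field $\mathbb{K}$ and $R=\mathbb{K}[x_1,\dots,x_l]$, for a multiarrangement with hyperplanes $\beta_i^{-1}(0)$ and multiplicities $\mathbf{m}_i\ge0$, $D=\{\delta=\sum_j f_j\partial_{x_j}: f_j\in R,\ \delta(\beta_i)\in\beta_i^{\mathbf{m}_i}R\ \forall i\}$, identified with a submodule of $R^l$. Let $S_p=\mathbb{F}_p[x_1,\dots,x_l]$, $\pi_p\colon S_\mathbb{Z}\to S_p$ reduction mod $p$, $\pi_p^k$ its componentwise extension to $S_\mathbb{Z}^k\to S_p^k$. A prime $p$ is good if $\pi_p(\alpha_i)\ne\pi_p(\alpha_j)$ for $i\ne j$; then $(\mathcal{A}_p,\mathbf{m})$ is the multiarrangement in $\mathbb{F}_p^l$ with hyperplanes $\pi_p(\alpha_i)^{-1}(0)$ of multiplicities $\mathbf{m}(H_i)$. Let $M(\mathcal{A},\mathbf{m})\subseteq S_\mathbb{Z}^n$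 be generated by $\alpha_i^{\mathbf{m}(H_i)}e_i$, $A(\mathcal{A})=(\partial\alpha_i/\partial x_j)_{i,j}$, and $\varphi_\mathbb{Z}\colon S_\mathbb{Z}^l\to S_\mathbb{Z}^n/M(\mathcal{A},\mathbf{m})$, $g\mapsto A(\mathcal{A})g$. The integer $p$ is a zero divisor of an $S_\mathbb{Z}$-module $N$ if $pv=0$ for some nonzero $v\in N$. *)

theory Defs
  imports "HOL-Library.Poly_Mapping" "Berlekamp_Zassenhaus.Finite_Field"
begin

text \<open>Multivariate polynomials: finitely supported maps from monomials (exponent
  vectors, variable x_(j+1) has index j) to coefficients.  The ring
  S_K = K[x_1,...,x_l] is the set of such polynomials only involving variables
  with index < l.\<close>

type_synonym 'a mpoly = "(nat \<Rightarrow>\<^sub>0 nat) \<Rightarrow>\<^sub>0 'a"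

definition const :: "'a::zero \<Rightarrow> 'a mpoly" where
  "const c = Poly_Mapping.single 0 c"

definition Var :: "nat \<Rightarrow> 'a::{zero,one} mpoly" where
  "Var j = Poly_Mapping.single (Poly_Mapping.single j 1) 1"

definition in_S :: "nat \<Rightarrow> 'a::zero mpoly \<Rightarrow> bool" where
  "in_S l q \<longleftrightarrow> (\<forall>mon\<in>Poly_Mapping.keys q. \<forall>v\<in>Poly_Mapping.keys mon. v < l)"

definition in_Sk :: "nat \<Rightarrow> nat \<Rightarrow> (nat \<Rightarrow> 'a::zero mpoly) \<Rightarrow> bool" where
  "in_Sk k l f \<longleftrightarrow> (\<forall>j<k. in_S l (f j)) \<and> (\<forall>j\<ge>k. f j = 0)"

definition S_dvd :: "nat \<Rightarrow> 'a::comm_ring_1 mpoly \<Rightarrow> 'a mpoly \<Rightarrow> bool" where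
  "S_dvd l u w \<longleftrightarrow> (\<exists>h. in_S l h \<and> w = u * h)"

definition lin_form :: "nat \<Rightarrow> (nat \<Rightarrow> 'a::comm_ring_1) \<Rightarrow> 'a mpoly" where
  "lin_form l c = (\<Sum>j<l. const (c j) * Var j)"

text \<open>Module of logarithmic derivations D(A,m) over K for the multiarrangement with
  defining linear forms alpha_i = lin_form l (coef i), i < n, multiplicities m i.
  For delta = sum_j f_j d/dx_j we have delta(alpha_i) = sum_j f_j * coef i j.\<close>
definition Dmod :: "nat \<Rightarrow> nat \<Rightarrow> (nat \<Rightarrow> nat \<Rightarrow> 'a::comm_ring_1) \<Rightarrow> (nat \<Rightarrow> nat)
    \<Rightarrow> (nat \<Rightarrow> 'a mpoly) set" where
  "Dmod l n coef m = {f. in_Sk l l f \<and>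
     (\<forall>i<n. S_dvd l (lin_form l (coef i) ^ m i) (\<Sum>j<l. f j * const (coef i j)))}"

definition red :: "int mpoly \<Rightarrow> 'p::prime_card mod_ring mpoly" where
  "red q = Poly_Mapping.map of_int q"

text \<open>M(A,m) subset of S_Z^n, generated by alpha_i^(m_i) e_i\<close>
definition Mmod :: "nat \<Rightarrow> nat \<Rightarrow> (nat \<Rightarrow> nat \<Rightarrow> int) \<Rightarrow> (nat \<Rightarrow> nat) \<Rightarrow> (nat \<Rightarrow> int mpoly) set" where
  "Mmod l n a m = {u. in_Sk n l u \<and> (\<forall>i<n. S_dvd l (lin_form l (a i) ^ m i) (u i))}"

text \<open>g \<mapsto> A(A) g, with A(A)_{ij} = d alpha_i / d x_j = a i j\<close>
definition Amul :: "nat \<Rightarrow> nat \<Rightarrow> (nat \<Rightarrow> nat \<Rightarrow> int) \<Rightarrow> (nat \<Rightarrow> int mpoly) \<Rightarrow> (nat \<Rightarrow> int mpoly)" where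
  "Amul l n a g = (\<lambda>i. if i < n then (\<Sum>j<l. const (a i j) * g j) else 0)"

text \<open>Ker(phi_Z), phi_Z : S_Z^l -> S_Z^n / M\<close>
definition ker_phiZ :: "nat \<Rightarrow> nat \<Rightarrow> (nat \<Rightarrow> nat \<Rightarrow> int) \<Rightarrow> (nat \<Rightarrow> nat) \<Rightarrow> (nat \<Rightarrow> int mpoly) set" where
  "ker_phiZ l n a m = {g. in_Sk l l g \<and> Amul l n a g \<in> Mmod l n a m}"

text \<open>coker(phi_Z) = S_Z^n / (M + im(A(A))); the submodule M + A(A) S_Z^l\<close>
definition coker_rel :: "nat \<Rightarrow> nat \<Rightarrow> (nat \<Rightarrow> nat \<Rightarrow> int) \<Rightarrow> (nat \<Rightarrow> nat) \<Rightarrow> (nat \<Rightarrow> int mpoly) set" where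
  "coker_rel l n a m = {\<lambda>i. u i + Amul l n a g i | u g. u \<in> Mmod l n a m \<and> in_Sk l l g}"

definition zero_divisor_coker :: "nat \<Rightarrow> nat \<Rightarrow> (nat \<Rightarrow> nat \<Rightarrow> int) \<Rightarrow> (nat \<Rightarrow> nat) \<Rightarrow> int \<Rightarrow> bool" where
  "zero_divisor_coker l n a m p \<longleftrightarrow>
     (\<exists>v. in_Sk n l v \<and> v \<notin> coker_rel l n a m \<and> (\<lambda>i. const p * v i) \<in> coker_rel l n a m)"

end

theory Submission
  imports Defs
begin

lemma lookup_pmap: "f 0 = 0 \<Longrightarrow> Poly_Mapping.lookup (Poly_Mapping.map f q) k = f (Poly_Mapping.lookup q k)"
  by (simp add: Poly_Mapping.map.rep_eq when_def)

lemma lookup_red: "Poly_Mapping.lookup (red q :: 'p::prime_card mod_ring mpoly) k = of_int (Poly_Mapping.lookup q k)"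
  unfolding red_def by (simp add: lookup_pmap)

lemma red_add: "(red (q1 + q2) :: 'p::prime_card mod_ring mpoly) = red q1 + red q2"
  by (rule poly_mapping_eqI) (simp add: lookup_red lookup_add)
lemma red_zero[simp]: "(red 0 :: 'p::prime_card mod_ring mpoly) = 0"
  by (rule poly_mapping_eqI) (simp add: lookup_red)
lemma red_uminus: "(red (- q) :: 'p::prime_card mod_ring mpoly) = - red q"
  by (rule poly_mapping_eqI) (simp add: lookup_red)
lemma red_diff: "(red (q1 - q2) :: 'p::prime_card mod_ring mpoly) = red q1 - red q2"
  by (rule poly_mapping_eqI) (simp add: lookup_red lookup_minus)
lemma red_sum: "(red (\<Sum>j\<in>A. f j) :: 'p::prime_card mod_ring mpoly) = (\<Sum>j\<in>A. red (f j))"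
  by (induction A rule: infinite_finite_induct) (auto simp: red_add)
lemma red_single: "(red (Poly_Mapping.single k c) :: 'p::prime_card mod_ring mpoly) = Poly_Mapping.single k (of_int c)"
  unfolding red_def by simp

lemma update_eq_add: "k \<notin> Poly_Mapping.keys f \<Longrightarrow> Poly_Mapping.update k b f = f + Poly_Mapping.single k b"
  by (rule poly_mapping_eqI) (auto simp: lookup_update lookup_add lookup_single when_def in_keys_iff)

lemma red_mult_single: "(red (Poly_Mapping.single k c * g) :: 'p::prime_card mod_ring mpoly) = red (Poly_Mapping.single k c) * red g"
proof (induction g rule: Poly_Mapping.update_induct)
  case const then show ?case by simp
next
  case (update f a b)
  then show ?case by (simp add: update_eq_add distrib_left red_add mult_single red_single)
qed

lemma red_mult: "(red (f * g) :: 'p::prime_card mod_ring mpoly) = red f * red g"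
proof (induction f rule: Poly_Mapping.update_induct)
  case const then show ?case by simp
next
  case (update f a b)
  then show ?case by (simp add: update_eq_add distrib_right red_add red_mult_single)
qed

lemma red_one: "(red 1 :: 'p::prime_card mod_ring mpoly) = 1"
  by (rule poly_mapping_eqI) (simp add: lookup_red lookup_one when_def)

lemma red_pow: "(red (f ^ k) :: 'p::prime_card mod_ring mpoly) = red f ^ k"
  by (induction k) (auto simp: red_mult red_one)

lemma red_const: "(red (const c) :: 'p::prime_card mod_ring mpoly) = const (of_int c)"
  unfolding const_def by (simp add: red_single)
lemma red_Var: "(red (Var j) :: 'p::prime_card mod_ring mpoly) = Var j"
  unfolding Var_def by (simp add: red_single)
lemma red_lin_form: "(red (lin_form l c) :: 'p::prime_card mod_ring mpoly) = lin_form l (\<lambda>j. of_int (c j))"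
  unfolding lin_form_def by (simp add: red_sum red_mult red_const red_Var)

lemma of_int_to_int_mod_ring: "of_int (to_int_mod_ring x) = (x :: 'a::nontriv mod_ring)"
  by (simp add: of_int_of_int_mod_ring)

lemma of_int_mod_ring_eq0: "(of_int x :: 'p::prime_card mod_ring) = 0 \<longleftrightarrow> int CARD('p) dvd x"
  unfolding of_int_of_int_mod_ring by transfer (simp add: dvd_eq_mod_eq_0)

definition lift :: "'p::prime_card mod_ring mpoly \<Rightarrow> int mpoly" where
  "lift q = Poly_Mapping.map to_int_mod_ring q"

lemma red_lift: "red (lift q) = q"
  by (rule poly_mapping_eqI) (simp add: lookup_red lift_def lookup_pmap of_int_to_int_mod_ring)

lemma keys_lift: "Poly_Mapping.keys (lift q) \<subseteq> Poly_Mapping.keys q"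
  by (auto simp: lift_def in_keys_iff lookup_pmap)

lemma lift_zero[simp]: "lift 0 = 0"
  by (rule poly_mapping_eqI) (simp add: lift_def lookup_pmap)

lemma const_mult_lookup: "Poly_Mapping.lookup (const c * q) k = c * Poly_Mapping.lookup q k"
  unfolding const_def by (simp add: mult_map_scale_conv_mult[symmetric] lookup_pmap)

lemma red_kernel:
  assumes "(red Q :: 'p::prime_card mod_ring mpoly) = 0"
  shows "Q = const (int CARD('p)) * Poly_Mapping.map (\<lambda>c. c div int CARD('p)) Q"
    and "Poly_Mapping.keys (Poly_Mapping.map (\<lambda>c. c div int CARD('p)) Q) \<subseteq> Poly_Mapping.keys Q"
proof -
  have d: "int CARD('p) dvd Poly_Mapping.lookup Q k" for k
    using arg_cong[OF assms, of "\<lambda>q. Poly_Mapping.lookup q k"]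
    by (simp add: lookup_red of_int_mod_ring_eq0)
  show "Q = const (int CARD('p)) * Poly_Mapping.map (\<lambda>c. c div int CARD('p)) Q"
    by (rule poly_mapping_eqI) (simp add: const_mult_lookup lookup_pmap d)
  show "Poly_Mapping.keys (Poly_Mapping.map (\<lambda>c. c div int CARD('p)) Q) \<subseteq> Poly_Mapping.keys Q"
    by (auto simp: in_keys_iff lookup_pmap)
qed

lemma in_S_subset: "Poly_Mapping.keys q \<subseteq> Poly_Mapping.keys q' \<Longrightarrow> in_S l q' \<Longrightarrow> in_S l q"
  unfolding in_S_def by blast
lemma in_S_zero[simp]: "in_S l 0"
  unfolding in_S_def by simp
lemma in_S_add: "in_S l q1 \<Longrightarrow> in_S l q2 \<Longrightarrow> in_S l (q1 + q2)"
  unfolding in_S_def using keys_add[of q1 q2] by (meson UnE subsetD)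
lemma in_S_uminus: "in_S l (q::'a::ab_group_add mpoly) \<Longrightarrow> in_S l (- q)"
  unfolding in_S_def by simp
lemma in_S_diff: "in_S l (q1::'a::ab_group_add mpoly) \<Longrightarrow> in_S l q2 \<Longrightarrow> in_S l (q1 - q2)"
  using in_S_add[of l q1 "-q2"] in_S_uminus[of l q2] by simp
lemma in_S_mult: "in_S l (q1::'a::comm_semiring_1 mpoly) \<Longrightarrow> in_S l q2 \<Longrightarrow> in_S l (q1 * q2)"
proof -
  assume a1: "in_S l q1" and a2: "in_S l q2"
  show ?thesis unfolding in_S_def
  proof (intro ballI)
    fix mon v assume m: "mon \<in> Poly_Mapping.keys (q1 * q2)" and v: "v \<in> Poly_Mapping.keys mon"
    have "mon \<in> {a + b | a b. a \<in> Poly_Mapping.keys q1 \<and> b \<in> Poly_Mapping.keys q2}"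
      using m keys_mult[of q1 q2] by (rule subsetD[rotated])
    then obtain x y where xy: "mon = x + y" "x \<in> Poly_Mapping.keys q1" "y \<in> Poly_Mapping.keys q2"
      by (auto simp only: mem_Collect_eq)
    have "v \<in> Poly_Mapping.keys x \<union> Poly_Mapping.keys y"
      using v keys_add[of x y] unfolding xy(1) by (rule subsetD[rotated])
    then show "v < l"
    proof
      assume "v \<in> Poly_Mapping.keys x" then show "v < l" using a1 xy(2) unfolding in_S_def by simp
    next
      assume "v \<in> Poly_Mapping.keys y" then show "v < l" using a2 xy(3) unfolding in_S_def by simp
    qed
  qed
qed
lemma in_S_const[simp]: "in_S l (const c)"
  unfolding in_S_def const_def by simp
lemma in_S_Var: "j < l \<Longrightarrow> in_S l (Var j :: 'a::zero_neq_one mpoly)"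
  unfolding in_S_def Var_def by simp
lemma in_S_sum: "(\<And>j. j \<in> A \<Longrightarrow> in_S l (f j)) \<Longrightarrow> in_S l (\<Sum>j\<in>A. f j)"
  by (induction A rule: infinite_finite_induct) (auto intro: in_S_add)
lemma in_S_one: "in_S l (1::'a::comm_semiring_1 mpoly)"
  using in_S_const[of l "1::'a"] unfolding const_def by (simp only: single_one)
lemma in_S_pow: "in_S l (q::'a::comm_semiring_1 mpoly) \<Longrightarrow> in_S l (q ^ k)"
  by (induction k) (auto intro: in_S_mult in_S_one)
lemma in_S_lin_form: "in_S l (lin_form l c)"
  unfolding lin_form_def by (auto intro!: in_S_sum in_S_mult in_S_Var)

theorem proposition4p3:
  fixes l n :: nat and a :: "nat \<Rightarrow> nat \<Rightarrow> int" and m :: "nat \<Rightarrow> nat"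
  assumes primitive: "\<forall>i<n. \<forall>q::int. prime q \<longrightarrow> \<not> (\<forall>j<l. q dvd a i j)"
    and distinct_hyperplanes: "\<forall>i<n. \<forall>j<n. i \<noteq> j \<longrightarrow>
        \<not> (\<exists>c::rat. \<forall>k<l. rat_of_int (a i k) = c * rat_of_int (a j k))"
    and good: "\<forall>i<n. \<forall>j<n. i \<noteq> j \<longrightarrow>
        (red (lin_form l (a i)) :: 'p::prime_card mod_ring mpoly) \<noteq> red (lin_form l (a j))"
    and not_zd: "\<not> zero_divisor_coker l n a m (int CARD('p))"
  shows "\<forall>\<delta> \<in> Dmod l n (\<lambda>i j. of_int (a i j) :: 'p mod_ring) m.
           \<exists>g \<in> ker_phiZ l n a m. (\<lambda>j. red (g j)) = \<delta>"
proof
  fix \<delta> assume d: "\<delta> \<in> Dmod l n (\<lambda>i j. of_int (a i j) :: 'p mod_ring) m"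
  define P where "P = int CARD('p)"
  define \<alpha> where "\<alpha> i = lin_form l (a i)" for i
  have dS: "in_Sk l l \<delta>" using d unfolding Dmod_def by simp
  have "\<forall>i<n. \<exists>h. in_S l h \<and> (\<Sum>j<l. \<delta> j * const (of_int (a i j))) = red (\<alpha> i) ^ m i * h"
    using d unfolding Dmod_def S_dvd_def \<alpha>_def by (simp add: red_lin_form)
  then obtain h where h: "\<And>i. i < n \<Longrightarrow> in_S l (h i) \<and> (\<Sum>j<l. \<delta> j * const (of_int (a i j))) = red (\<alpha> i) ^ m i * h i"
    by metis
  define g0 where "g0 j = lift (\<delta> j)" for j
  define ht where "ht i = (if i < n then lift (h i) else 0)" for i
  define r where "r i = Amul l n a g0 i - (if i < n then \<alpha> i ^ m i * ht i else 0)" for i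
  define w where "w i = Poly_Mapping.map (\<lambda>c. c div P) (r i)" for i
  have g0S: "in_Sk l l g0"
    using dS unfolding in_Sk_def g0_def by (auto intro: in_S_subset[OF keys_lift])
  have htS: "in_S l (ht i)" for i
    using h unfolding ht_def by (auto intro: in_S_subset[OF keys_lift])
  have AmulS: "in_Sk l l g \<Longrightarrow> in_Sk n l (Amul l n a g)" for g
    unfolding in_Sk_def Amul_def by (auto intro!: in_S_sum in_S_mult)
  have rS: "in_S l (r i)" for i
    using AmulS[OF g0S] htS unfolding r_def in_Sk_def \<alpha>_def
    by (auto intro!: in_S_diff in_S_mult in_S_pow in_S_lin_form)
  have redr: "(red (r i) :: 'p mod_ring mpoly) = 0" for i
  proof (cases "i < n")
    case True
    have "(red (Amul l n a g0 i) :: 'p mod_ring mpoly) = (\<Sum>j<l. \<delta> j * const (of_int (a i j)))"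
      using True unfolding Amul_def g0_def
      by (simp add: red_sum red_mult red_const red_lift mult.commute)
    then show ?thesis using True h[OF True]
      by (simp add: r_def red_diff red_mult red_pow ht_def red_lift)
  next
    case False then show ?thesis by (simp add: r_def Amul_def)
  qed
  have rw: "r i = const P * w i" for i
    using red_kernel(1)[OF redr[of i]] unfolding w_def P_def by simp
  have wS: "in_Sk n l w"
    unfolding in_Sk_def
  proof (intro conjI allI impI)
    fix i show "in_S l (w i)" using red_kernel(2)[OF redr[of i]] rS[of i] unfolding w_def P_def
      by (blast intro: in_S_subset)
  next
    fix i assume "i \<ge> n" then show "w i = 0"
      by (simp add: w_def r_def Amul_def map_eq_zero_iff)
  qed
  define u' where "u' i = (if i < n then - (\<alpha> i ^ m i * ht i) else 0)" for i
  have u'M: "u' \<in> Mmod l n a m"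
    unfolding Mmod_def in_Sk_def S_dvd_def u'_def \<alpha>_def
    using htS by (auto intro!: exI[of _ "- ht i" for i] in_S_uminus in_S_mult in_S_pow in_S_lin_form)
  have "(\<lambda>i. const P * w i) = (\<lambda>i. u' i + Amul l n a g0 i)"
    by (auto simp: rw[symmetric] r_def u'_def Amul_def)
  then have "(\<lambda>i. const P * w i) \<in> coker_rel l n a m"
    unfolding coker_rel_def using u'M g0S by blast
  then have "w \<in> coker_rel l n a m" using not_zd wS unfolding zero_divisor_coker_def P_def by blast
  then obtain u g1 where wu: "w = (\<lambda>i. u i + Amul l n a g1 i)" and uM: "u \<in> Mmod l n a m" and g1S: "in_Sk l l g1"
    unfolding coker_rel_def by blast
  have "\<forall>i<n. \<exists>h. in_S l h \<and> u i = \<alpha> i ^ m i * h"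
    using uM unfolding Mmod_def S_dvd_def \<alpha>_def by blast
  then obtain hu where hu: "\<And>i. i < n \<Longrightarrow> in_S l (hu i) \<and> u i = \<alpha> i ^ m i * hu i"
    by metis
  define g where "g j = g0 j - const P * g1 j" for j
  have gS: "in_Sk l l g" using g0S g1S unfolding g_def in_Sk_def by (auto intro!: in_S_diff in_S_mult)
  have redP: "(red (const P) :: 'p mod_ring mpoly) = 0"
  proof -
    have "(of_int P :: 'p mod_ring) = 0" unfolding P_def by (rule iffD2[OF of_int_mod_ring_eq0]) simp
    then show ?thesis by (simp only: red_const) (simp add: const_def)
  qed
  have redg: "(\<lambda>j. red (g j)) = \<delta>"
    by (auto simp: g_def red_diff red_mult redP g0_def red_lift)
  have "Amul l n a g \<in> Mmod l n a m"
    unfolding Mmod_def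
  proof (intro CollectI conjI allI impI)
    show "in_Sk n l (Amul l n a g)" using AmulS[OF gS] .
  next
    fix i assume i: "i < n"
    have "Amul l n a g i = Amul l n a g0 i - const P * Amul l n a g1 i"
      using i unfolding Amul_def g_def
      by (simp add: right_diff_distrib sum_subtractf sum_distrib_left algebra_simps)
    also have "\<dots> = \<alpha> i ^ m i * ht i + const P * w i - const P * Amul l n a g1 i"
      using rw[of i] i unfolding r_def by (simp add: algebra_simps)
    also have "\<dots> = \<alpha> i ^ m i * (ht i + const P * hu i)"
      using hu[OF i] wu by (simp add: algebra_simps)
    finally have eq: "Amul l n a g i = lin_form l (a i) ^ m i * (ht i + const P * hu i)"
      unfolding \<alpha>_def .
    show "S_dvd l (lin_form l (a i) ^ m i) (Amul l n a g i)"
      unfolding S_dvd_def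
    proof (intro exI conjI)
      show "in_S l (ht i + const P * hu i)" using hu[OF i] htS by (auto intro!: in_S_add in_S_mult)
    qed (rule eq)
  qed
  then show "\<exists>g \<in> ker_phiZ l n a m. (\<lambda>j. red (g j)) = \<delta>"
    using gS redg unfolding ker_phiZ_def by blast
qed

end
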